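(* For $k\ge 2$ let $f_k(x)=\sum_{n\ge 0}|S_n(123,\,k(k-1)\cdots 21(k+1))|\,x^n$ (the $n=0$ term being $1$). Then $f_2(x)=\frac{1-x}{1-2x}$ and, for every $k\ge 3$, $$f_k(x)=\frac{1}{1-x\,f_{k-1}(x)}.$$ In particular $f_3(x)=\frac{1-2x}{1-3x+x^2}$, so $|S_n(123,3214)|$ is the sequence $1,1,2,5,13,34,89,\dots$ (defined by $\bar F_0=\bar F_1=1$, $\bar F_2=2$, $\bar F_n=3\bar F_{n-1}-\bar F_{n-2}$ for $n\ge 3$). *)

theory Defs
  imports "HOL-Computational_Algebra.Formal_Power_Series"
begin

definition perms :: "nat \<Rightarrow> nat list set" where
  "perms n = {xs. distinct xs \<and> set xs = {1..n}}"

definition contains :: "nat list \<Rightarrow> nat list \<Rightarrow> bool" where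
  "contains p q \<longleftrightarrow> (\<exists>idx. length idx = length q \<and> sorted_wrt (<) idx \<and>
      (\<forall>i<length idx. idx ! i < length p) \<and>
      (\<forall>i<length q. \<forall>j<length q. (p ! (idx ! i) < p ! (idx ! j) \<longleftrightarrow> q ! i < q ! j)))"

definition avoids :: "nat list \<Rightarrow> nat list \<Rightarrow> bool" where
  "avoids p q \<longleftrightarrow> \<not> contains p q"

definition patt :: "nat \<Rightarrow> nat list" where
  "patt k = rev [1..<k+1] @ [k+1]"

definition Sav :: "nat \<Rightarrow> nat \<Rightarrow> nat list set" where
  "Sav k n = {p \<in> perms n. avoids p [1,2,3] \<and> avoids p (patt k)}"

definition genf :: "nat \<Rightarrow> rat fps" where
  "genf k = Abs_fps (\<lambda>n. of_nat (card (Sav k n)))"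

fun Fbar :: "nat \<Rightarrow> nat" where
  "Fbar 0 = 1"
| "Fbar (Suc 0) = 1"
| "Fbar (Suc (Suc 0)) = 2"
| "Fbar (Suc (Suc (Suc n))) = 3 * Fbar (Suc (Suc n)) - Fbar (Suc n)"

end

theory Submission
  imports Defs
begin

fun steps :: "nat list \<Rightarrow> bool" where
  "steps [] = True"
| "steps [x] = True"
| "steps (x # y # ys) = (y \<le> x + 1 \<and> steps (y # ys))"

lemma steps_append:
  "steps (xs @ ys) \<longleftrightarrow> steps xs \<and> steps ys \<and> (xs \<noteq> [] \<and> ys \<noteq> [] \<longrightarrow> hd ys \<le> last xs + 1)"
proof (induction xs rule: steps.induct)
  case 1 then show ?case by simp
next
  case (2 x) then show ?case by (cases ys) auto
next
  case (3 x y ys) then show ?case by auto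
qed

lemma steps_map_Suc: "steps (map Suc u) = steps u"
  by (induction u rule: steps.induct) auto

lemma steps_Cons: "steps (x # xs) \<longleftrightarrow> steps xs \<and> (xs \<noteq> [] \<longrightarrow> hd xs \<le> x + 1)"
  by (cases xs) auto

definition G :: "nat \<Rightarrow> nat \<Rightarrow> nat list set" where
  "G k n = {g. length g = n \<and> set g \<subseteq> {..<k} \<and> steps g \<and> (g \<noteq> [] \<longrightarrow> hd g = 0)}"

lemma finite_G: "finite (G k n)"
proof -
  have "G k n \<subseteq> {xs. set xs \<subseteq> {..<k} \<and> length xs = n}" unfolding G_def by auto
  then show ?thesis using finite_lists_length_eq[of "{..<k}" n] finite_subset by blast
qed

lemma G_0: "G k 0 = {[]}" unfolding G_def by auto

lemma G_zero_Suc: "G 0 (Suc n) = {}" unfolding G_def by (auto simp: length_Suc_conv)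

definition joinF :: "nat \<times> nat list \<times> nat list \<Rightarrow> nat list" where
  "joinF x = (case x of (j, u, r) \<Rightarrow> 0 # map Suc u @ r)"

lemma tw_F: "r = [] \<or> hd r = 0 \<Longrightarrow> takeWhile (\<lambda>x. 0 < x) (map Suc u @ r) = map Suc u"
  by (induction u) (cases r, auto)+

lemma G_decomp:
  "G (Suc k) (Suc n) = joinF ` (SIGMA j:{..n}. G k j \<times> G (Suc k) (n - j))"
proof
  show "joinF ` (SIGMA j:{..n}. G k j \<times> G (Suc k) (n - j)) \<subseteq> G (Suc k) (Suc n)"
  proof
    fix g assume "g \<in> joinF ` (SIGMA j:{..n}. G k j \<times> G (Suc k) (n - j))"
    then obtain j u r where j: "j \<le> n" and u: "u \<in> G k j" and r: "r \<in> G (Suc k) (n - j)"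
      and g: "g = 0 # map Suc u @ r" unfolding joinF_def by auto
    have l: "length g = Suc n" using j u r g unfolding G_def by auto
    have s: "set g \<subseteq> {..<Suc k}" using u r g unfolding G_def by auto
    have su: "steps (0 # map Suc u)"
      using u unfolding G_def by (cases u) (auto simp: steps_map_Suc[of "_ # _", simplified])
    have "steps g" unfolding g using su r unfolding G_def
      by (subst append_Cons[symmetric], subst steps_append) auto
    then show "g \<in> G (Suc k) (Suc n)" using l s g unfolding G_def by auto
  qed
next
  show "G (Suc k) (Suc n) \<subseteq> joinF ` (SIGMA j:{..n}. G k j \<times> G (Suc k) (n - j))"
  proof
    fix g assume g: "g \<in> G (Suc k) (Suc n)"
    then obtain t where gt: "g = 0 # t" and lt: "length t = n"
      unfolding G_def by (cases g) auto
    define w where "w = takeWhile (\<lambda>x. 0 < x) t"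
    define r where "r = dropWhile (\<lambda>x. 0 < x) t"
    define u where "u = map (\<lambda>x. x - 1) w"
    have wpos: "\<forall>x\<in>set w. 0 < x" unfolding w_def by (meson set_takeWhileD)
    have wu: "w = map Suc u" unfolding u_def using wpos by (induction w) auto
    have t: "t = map Suc u @ r" using wu takeWhile_dropWhile_id[of _ t] unfolding w_def r_def by metis
    have st: "steps g" and sg: "set g \<subseteq> {..<Suc k}" using g unfolding G_def by auto
    have st2: "steps (0 # map Suc u) \<and> steps r"
      using st unfolding gt t by (subst (asm) append_Cons[symmetric], subst (asm) steps_append) auto
    have hr: "r = [] \<or> hd r = 0" unfolding r_def by (metis hd_dropWhile gr0I)
    have u1: "u \<in> G k (length u)"
    proof -
      have "set u \<subseteq> {..<k}" using sg unfolding gt t by auto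
      moreover have "steps u" using st2 by (auto simp: steps_Cons steps_map_Suc)
      moreover have "u \<noteq> [] \<longrightarrow> hd u = 0" using st2 by (cases u) auto
      ultimately show ?thesis unfolding G_def by auto
    qed
    have r1: "r \<in> G (Suc k) (n - length u)"
      using st2 hr sg lt unfolding gt t G_def by auto
    have "length u \<le> n" using lt t by simp
    then have "(length u, u, r) \<in> (SIGMA j:{..n}. G k j \<times> G (Suc k) (n - j))" using u1 r1 by simp
    moreover have "g = joinF (length u, u, r)" unfolding joinF_def gt t by simp
    ultimately show "g \<in> joinF ` (SIGMA j:{..n}. G k j \<times> G (Suc k) (n - j))" by blast
  qed
qed

lemma inj_F: "inj_on joinF (SIGMA j:{..n}. G k j \<times> G (Suc k) (n - j))"
proof (rule inj_onI)
  fix x y assume x: "x \<in> (SIGMA j:{..n}. G k j \<times> G (Suc k) (n - j))"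
    and y: "y \<in> (SIGMA j:{..n}. G k j \<times> G (Suc k) (n - j))" and e: "joinF x = joinF y"
  obtain j1 u1 r1 where x1: "x = (j1, u1, r1)" by (cases x) auto
  obtain j2 u2 r2 where y1: "y = (j2, u2, r2)" by (cases y) auto
  have h1: "r1 = [] \<or> hd r1 = 0" and h2: "r2 = [] \<or> hd r2 = 0"
    using x y unfolding x1 y1 G_def by auto
  have e2: "map Suc u1 @ r1 = map Suc u2 @ r2" using e unfolding x1 y1 joinF_def by simp
  have "map Suc u1 = map Suc u2"
    using tw_F[OF h1, of u1] tw_F[OF h2, of u2] e2 by metis
  then have uu: "u1 = u2" by (simp add: inj_map_eq_map)
  then have "r1 = r2" using e2 by simp
  moreover have "j1 = length u1" "j2 = length u2" using x y unfolding x1 y1 G_def by auto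
  ultimately show "x = y" using uu x1 y1 by simp
qed

definition cntG :: "nat \<Rightarrow> nat \<Rightarrow> nat" where "cntG k n = card (G k n)"

lemma a_0: "cntG k 0 = 1" unfolding cntG_def G_0 by simp
lemma a_zero_Suc: "cntG 0 (Suc n) = 0" unfolding cntG_def G_zero_Suc by simp

lemma a_rec: "cntG (Suc k) (Suc n) = (\<Sum>j\<le>n. cntG k j * cntG (Suc k) (n - j))"
proof -
  have "cntG (Suc k) (Suc n) = card (SIGMA j:{..n}. G k j \<times> G (Suc k) (n - j))"
    unfolding cntG_def G_decomp by (rule card_image[OF inj_F])
  also have "\<dots> = (\<Sum>j\<le>n. card (G k j \<times> G (Suc k) (n - j)))"
    by (rule card_SigmaI) (auto simp: finite_G)
  also have "\<dots> = (\<Sum>j\<le>n. cntG k j * cntG (Suc k) (n - j))"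
    unfolding cntG_def by (simp add: card_cartesian_product)
  finally show ?thesis .
qed

definition gfG :: "nat \<Rightarrow> rat fps" where "gfG k = Abs_fps (\<lambda>n. of_nat (cntG k n))"

lemma A_0: "gfG 0 = 1"
  proof (rule fps_ext)
  fix n show "fps_nth (gfG 0) n = fps_nth 1 n" by (cases n) (auto simp: gfG_def a_0 a_zero_Suc)
qed

lemma A_rec: "gfG (Suc k) = 1 + fps_X * gfG k * gfG (Suc k)"
proof (rule fps_ext)
  fix n show "fps_nth (gfG (Suc k)) n = fps_nth (1 + fps_X * gfG k * gfG (Suc k)) n"
  proof (cases n)
    case 0 then show ?thesis by (simp add: gfG_def a_0)
  next
    case (Suc m)
    have "fps_nth (1 + fps_X * gfG k * gfG (Suc k)) n = fps_nth (gfG k * gfG (Suc k)) m"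
      using Suc by (simp add: mult.assoc)
    also have "\<dots> = (\<Sum>i=0..m. of_nat (cntG k i) * of_nat (cntG (Suc k) (m - i)))"
      by (simp add: fps_mult_nth gfG_def)
    also have "\<dots> = of_nat (cntG (Suc k) n)"
      using Suc by (simp add: a_rec atLeast0AtMost)
    finally show ?thesis by (simp add: gfG_def)
  qed
qed

lemma A_inv: "gfG (Suc k) = inverse (1 - fps_X * gfG k)"
proof -
  have "(1 - fps_X * gfG k) * gfG (Suc k) = gfG (Suc k) - fps_X * gfG k * gfG (Suc k)"
    by (simp add: left_diff_distrib)
  also have "\<dots> = 1" using A_rec[of k] by (metis add_diff_cancel_right')
  finally have "(1 - fps_X * gfG k) * gfG (Suc k) = 1" .
  then show ?thesis by (rule fps_inverse_unique[symmetric])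
qed

definition avoid123 :: "nat list \<Rightarrow> bool" where
  "avoid123 p \<longleftrightarrow> (\<forall>i j l. i < j \<longrightarrow> j < l \<longrightarrow> l < length p \<longrightarrow> \<not> (p!i < p!j \<and> p!j < p!l))"

lemma less3: "(a::nat) < 3 \<longleftrightarrow> a = 0 \<or> a = 1 \<or> a = 2" by auto
lemma less3': "(a::nat) < Suc (Suc (Suc 0)) \<longleftrightarrow> a = 0 \<or> a = 1 \<or> a = 2" by auto

lemma avoids123_iff: "avoids p [1,2,3] \<longleftrightarrow> avoid123 p"
proof
  assume av: "avoids p [1,2,3]"
  show "avoid123 p" unfolding avoid123_def
  proof (intro allI impI notI)
    fix i j l assume h: "i < j" "j < l" "l < length p" "p!i < p!j \<and> p!j < p!l"
    have "contains p [1,2,3]" unfolding contains_def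
      by (rule exI[of _ "[i,j,l]"]) (use h in \<open>auto simp: less3' \<close>)
    then show False using av unfolding avoids_def by simp
  qed
next
  assume a: "avoid123 p"
  show "avoids p [1,2,3]" unfolding avoids_def contains_def
  proof
    assume "\<exists>idx. length idx = length [1::nat,2,3] \<and> sorted_wrt (<) idx \<and>
      (\<forall>i<length idx. idx ! i < length p) \<and>
      (\<forall>i<length [1::nat,2,3]. \<forall>j<length [1::nat,2,3]. (p ! (idx ! i) < p ! (idx ! j) \<longleftrightarrow> [1::nat,2,3] ! i < [1,2,3] ! j))"
    then obtain idx where H: "length idx = length [1::nat,2,3] \<and> sorted_wrt (<) idx \<and>
      (\<forall>i<length idx. idx ! i < length p) \<and>
      (\<forall>i<length [1::nat,2,3]. \<forall>j<length [1::nat,2,3]. (p ! (idx ! i) < p ! (idx ! j) \<longleftrightarrow> [1::nat,2,3] ! i < [1,2,3] ! j))"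
      by blast
    have l: "length idx = 3" and s: "sorted_wrt (<) idx" and b: "\<forall>i<length idx. idx ! i < length p"
      and o: "\<forall>i<3. \<forall>j<3. (p ! (idx ! i) < p ! (idx ! j) \<longleftrightarrow> [1::nat,2,3] ! i < [1,2,3] ! j)"
      using H by auto
    have "idx!0 < idx!1" "idx!1 < idx!2" using sorted_wrt_nth_less[OF s] l by auto
    moreover have "idx!2 < length p" using b l by auto
    moreover have "p!(idx!0) < p!(idx!1)" "p!(idx!1) < p!(idx!2)" using o by auto
    ultimately show False using a unfolding avoid123_def by blast
  qed
qed

definition ls :: "nat list \<Rightarrow> nat \<Rightarrow> nat" where
  "ls p t = card {i. i < t \<and> p!i < p!t}"

lemma length_patt: "length (patt k) = Suc k" unfolding patt_def by simp

lemma patt_nth: "a \<le> k \<Longrightarrow> patt k ! a = (if a < k then k - a else k + 1)"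
  unfolding patt_def by (auto simp: nth_append rev_nth simp del: upt_Suc)

lemma contains_patt_ls:
  assumes "contains p (patt k)"
  shows "\<exists>t<length p. k \<le> ls p t"
proof -
  obtain idx where l: "length idx = Suc k" and s: "sorted_wrt (<) idx"
    and b: "\<forall>i<length idx. idx ! i < length p"
    and o: "\<forall>i<Suc k. \<forall>j<Suc k. (p ! (idx ! i) < p ! (idx ! j) \<longleftrightarrow> patt k ! i < patt k ! j)"
    using assms unfolding contains_def length_patt by auto
  define t where "t = idx ! k"
  have tl: "t < length p" using b l t_def by auto
  have sub: "(\<lambda>a. idx ! a) ` {..<k} \<subseteq> {i. i < t \<and> p!i < p!t}"
  proof
    fix x assume "x \<in> (\<lambda>a. idx ! a) ` {..<k}"
    then obtain a where a: "a < k" "x = idx ! a" by auto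
    have "idx ! a < idx ! k" using sorted_wrt_nth_less[OF s, of a k] a l by auto
    moreover have "p ! (idx ! a) < p ! (idx ! k)" using o a by (auto simp: patt_nth)
    ultimately show "x \<in> {i. i < t \<and> p!i < p!t}" using a t_def by auto
  qed
  have inj: "inj_on (\<lambda>a. idx ! a) {..<k}"
  proof (rule inj_onI)
    fix x y assume "x \<in> {..<k}" "y \<in> {..<k}" "idx ! x = idx ! y"
    then show "x = y" using sorted_wrt_nth_less[OF s, of x y] sorted_wrt_nth_less[OF s, of y x] l
      by (metis lessThan_iff less_Suc_eq linorder_neq_iff order_less_irrefl)
  qed
  have "k = card ((\<lambda>a. idx ! a) ` {..<k})" using card_image[OF inj] by simp
  also have "\<dots> \<le> ls p t" unfolding ls_def by (rule card_mono[OF _ sub]) auto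
  finally show ?thesis using tl by auto
qed

lemma ls_contains_patt:
  assumes d: "distinct p" and a: "avoid123 p" and tl: "t < length p" and k: "k \<le> ls p t"
  shows "contains p (patt k)"
proof -
  define S where "S = {i. i < t \<and> p!i < p!t}"
  have fS: "finite S" unfolding S_def by auto
  define L where "L = take k (sorted_list_of_set S)"
  have lL: "length L = k" using k fS unfolding L_def ls_def S_def[symmetric] by simp
  have sL: "sorted_wrt (<) L" unfolding L_def using sorted_list_of_set.strict_sorted_key_list_of_set[of S] by simp
  have setL: "set L \<subseteq> S" unfolding L_def using set_take_subset[of k "sorted_list_of_set S"] fS by simp
  have dec: "p!j < p!i" if "i \<in> S" "j \<in> S" "i < j" for i j
  proof -
    have "i < length p" "j < length p" using that tl unfolding S_def by auto
    then have "p!i \<noteq> p!j" using d \<open>i < j\<close> by (simp add: nth_eq_iff_index_eq)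
    moreover have "\<not> (p!i < p!j \<and> p!j < p!t)" using a that tl unfolding avoid123_def S_def by auto
    ultimately show ?thesis using that unfolding S_def by auto
  qed
  have LS: "L ! a \<in> S" if "a < k" for a using setL lL that by (metis nth_mem subsetD)
  define idx where "idx = L @ [t]"
  have idxn: "idx ! a = (if a < k then L ! a else t)" if "a \<le> k" for a
    using that lL unfolding idx_def by (auto simp: nth_append)
  show ?thesis unfolding contains_def length_patt
  proof (rule exI[of _ idx], intro conjI allI impI)
    show "length idx = Suc k" using lL idx_def by simp
    show "sorted_wrt (<) idx" unfolding idx_def sorted_wrt_append using sL setL
      unfolding S_def by auto
    fix i assume "i < length idx"
    then show "idx ! i < length p" using idxn[of i] LS[of i] tl lL unfolding idx_def S_def by auto
  next
    fix i j assume i: "i < Suc k" and j: "j < Suc k"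
    show "p ! (idx ! i) < p ! (idx ! j) \<longleftrightarrow> patt k ! i < patt k ! j"
    proof (cases "i < k")
      case ik: True
      show ?thesis
      proof (cases "j < k")
        case jk: True
        have ord: "L ! i < L ! j \<longleftrightarrow> i < j"
          using sorted_wrt_nth_less[OF sL, of i j] sorted_wrt_nth_less[OF sL, of j i] ik jk lL
          by (metis linorder_neq_iff order_less_asym order_less_irrefl)
        have ord2: "L ! j < L ! i \<longleftrightarrow> j < i"
          using sorted_wrt_nth_less[OF sL, of i j] sorted_wrt_nth_less[OF sL, of j i] ik jk lL
          by (metis linorder_neq_iff order_less_asym order_less_irrefl)
        have "p ! (L ! i) < p ! (L ! j) \<longleftrightarrow> j < i"
          using dec[OF LS[OF ik] LS[OF jk]] dec[OF LS[OF jk] LS[OF ik]] ord ord2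
          by (cases i j rule: linorder_cases) auto
        then show ?thesis using ik jk idxn[of i] idxn[of j] by (auto simp: patt_nth)
      next
        case False
        then have "j = k" using j by auto
        then show ?thesis using ik idxn[of i] idxn[of j] LS[OF ik] by (auto simp: patt_nth S_def)
      qed
    next
      case False
      then have ik: "i = k" using i by auto
      show ?thesis
      proof (cases "j < k")
        case jk: True
        then show ?thesis using ik idxn[of i] idxn[of j] LS[OF jk] by (auto simp: patt_nth S_def)
      next
        case False
        then have "j = k" using j by auto
        then show ?thesis using ik by auto
      qed
    qed
  qed
qed

fun gsuf :: "nat list \<Rightarrow> nat list" where
  "gsuf [] = []"
| "gsuf (x # xs) = (Max (set (x # xs)) - length (x # xs)) # gsuf xs"

lemma length_gsuf [simp]: "length (gsuf p) = length p"
  by (induction p) auto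

lemma gsuf_nth: "t < length p \<Longrightarrow> gsuf p ! t = Max (set (drop t p)) - (length p - t)"
proof (induction p arbitrary: t)
  case Nil then show ?case by simp
next
  case (Cons x xs) then show ?case by (cases t) auto
qed

lemma steps_gsuf: "steps (gsuf p)"
proof (induction p rule: gsuf.induct)
  case 1 then show ?case by simp
next
  case (2 x xs)
  show ?case
  proof (cases xs)
    case Nil then show ?thesis by simp
  next
    case (Cons y ys)
    have "Max (set (y # ys)) \<le> Max (set (x # y # ys))" by (rule Max_mono) auto
    then show ?thesis using 2 Cons by simp
  qed
qed

lemma count_smaller:
  assumes d: "distinct p" and s: "set p = {1..n}" and t: "t < length p"
  shows "card {i. i < t \<and> p!i < p!t} + card {i. t < i \<and> i < length p \<and> p!i < p!t} = p!t - 1"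
proof -
  let ?c = "p!t"
  have ln: "length p = n" using d s by (metis card_atLeastAtMost diff_Suc_1 distinct_card)
  have "{i. i < length p \<and> p!i < ?c} = {i. i < t \<and> p!i < ?c} \<union> {i. t < i \<and> i < length p \<and> p!i < ?c}"
    using t by auto (metis linorder_neqE_nat order_less_irrefl)
  moreover have "{i. i < t \<and> p!i < ?c} \<inter> {i. t < i \<and> i < length p \<and> p!i < ?c} = {}" by auto
  moreover have f1: "finite {i. i < t \<and> p!i < ?c}" by simp
  moreover have f2: "finite {i. t < i \<and> i < length p \<and> p!i < ?c}"
    by (rule finite_subset[of _ "{..<length p}"]) auto
  ultimately have "card {i. i < length p \<and> p!i < ?c} = card {i. i < t \<and> p!i < ?c} + card {i. t < i \<and> i < length p \<and> p!i < ?c}"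
    using card_Un_disjoint[OF f1 f2] by simp
  moreover have "card {i. i < length p \<and> p!i < ?c} = card (nth p ` {i. i < length p \<and> p!i < ?c})"
    by (rule card_image[symmetric]) (rule inj_on_nth[OF d], auto)
  moreover have "nth p ` {i. i < length p \<and> p!i < ?c} = {1..<?c}"
  proof -
    have "nth p ` {i. i < length p \<and> p!i < ?c} = {v \<in> set p. v < ?c}"
      by (auto simp: in_set_conv_nth)
    also have "\<dots> = {1..<?c}" using s t nth_mem[OF t] by auto
    finally show ?thesis .
  qed
  ultimately show ?thesis by simp
qed

lemma card_le_Max: "finite B \<Longrightarrow> B \<noteq> {} \<Longrightarrow> 0 \<notin> B \<Longrightarrow> card B \<le> Max (B::nat set)"
proof -
  assume "finite B" "B \<noteq> {}" "0 \<notin> B"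
  then have "B \<subseteq> {1..Max B}" by (auto simp: Suc_le_eq gr0I)
  then show ?thesis using card_mono[of "{1..Max B}" B] by simp
qed

lemma nth_in_drop: "t \<le> i \<Longrightarrow> i < length p \<Longrightarrow> p!i \<in> set (drop t p)"
proof -
  assume h: "t \<le> i" "i < length p"
  have "drop t p ! (i - t) \<in> set (drop t p)" by (rule nth_mem) (use h in simp)
  then show ?thesis using h by simp
qed

lemma C1:
  assumes d: "distinct p" and s: "set p = {1..n}" and a: "avoid123 p" and t: "t < length p"
  shows "ls p t \<le> gsuf p ! t"
proof -
  define M where "M = Max (set (drop t p))"
  have ne: "set (drop t p) \<noteq> {}" using t by simp
  have ptin: "p!t \<in> set (drop t p)" using t by (simp add: nth_in_drop)
  have g: "gsuf p ! t = M - (length p - t)" using gsuf_nth[OF t] M_def by simp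
  show ?thesis
  proof (cases "p!t = M")
    case True
    have "{i. t < i \<and> i < length p \<and> p!i < p!t} = {t<..<length p}"
    proof -
      have "p!i < p!t" if "t < i" "i < length p" for i
      proof -
        have "p!i \<in> set (drop t p)" using that by (simp add: nth_in_drop)
        then have "p!i \<le> M" unfolding M_def by simp
        moreover have "p!i \<noteq> p!t" using d that t by (simp add: nth_eq_iff_index_eq)
        ultimately show ?thesis using True by simp
      qed
      then show ?thesis by auto
    qed
    then have "ls p t + (length p - Suc t) = p!t - 1"
      using count_smaller[OF d s t] unfolding ls_def by simp
    then show ?thesis using g True t by simp
  next
    case False
    have "p!t \<le> M" unfolding M_def using ptin by simp
    then have lt: "p!t < M" using False by simp
    have "M \<in> set (drop t p)" unfolding M_def using ne by simp
    then obtain j where j: "j < length p - t" "drop t p ! j = M" by (auto simp: in_set_conv_nth)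
    define l where "l = t + j"
    have l: "l < length p" "p!l = M" using j t unfolding l_def by auto
    then have "t < l" using lt unfolding l_def using j by (cases j) auto
    have "\<not> (p!i < p!t \<and> p!t < p!l)" if "i < t" for i
      using a l \<open>t < l\<close> that unfolding avoid123_def by blast
    then have "{i. i < t \<and> p!i < p!t} = {}" using lt l by auto
    then show ?thesis unfolding ls_def by (metis card.empty zero_le)
  qed
qed

lemma C2:
  assumes d: "distinct p" and s: "set p = {1..n}" and t: "t < length p"
  shows "\<exists>t'<length p. gsuf p ! t \<le> ls p t'"
proof -
  define M where "M = Max (set (drop t p))"
  have ne: "set (drop t p) \<noteq> {}" using t by simp
  have g: "gsuf p ! t = M - (length p - t)" using gsuf_nth[OF t] M_def by simp
  have "M \<in> set (drop t p)" unfolding M_def using ne by simp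
  then obtain j where j: "j < length p - t" "drop t p ! j = M" by (auto simp: in_set_conv_nth)
  define l where "l = t + j"
  have l: "l < length p" "p!l = M" using j t unfolding l_def by auto
  have "{i. l < i \<and> i < length p \<and> p!i < p!l} \<subseteq> {l<..<length p}" by auto
  then have "card {i. l < i \<and> i < length p \<and> p!i < p!l} \<le> length p - Suc l"
    using card_mono[of "{l<..<length p}"] by fastforce
  then have "M - (length p - t) \<le> ls p l"
    using count_smaller[OF d s l(1)] l unfolding ls_def l_def by linarith
  then show ?thesis using g l by auto
qed

lemma len_perm: "distinct p \<Longrightarrow> set p = {1..n} \<Longrightarrow> length p = n"
  by (metis card_atLeastAtMost diff_Suc_1 distinct_card)

lemma avoid_patt_iff:
  assumes d: "distinct p" and s: "set p = {1..n}" and a: "avoid123 p"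
  shows "\<not> contains p (patt k) \<longleftrightarrow> set (gsuf p) \<subseteq> {..<k}"
proof
  assume nc: "\<not> contains p (patt k)"
  show "set (gsuf p) \<subseteq> {..<k}"
  proof
    fix x assume "x \<in> set (gsuf p)"
    then obtain t where t: "t < length p" "gsuf p ! t = x" by (auto simp: in_set_conv_nth)
    show "x \<in> {..<k}"
    proof (rule ccontr)
      assume "x \<notin> {..<k}"
      then have "k \<le> gsuf p ! t" using t by simp
      with C2[OF d s t(1)] obtain t' where "t' < length p" "k \<le> ls p t'" by (meson order_trans)
      then show False using ls_contains_patt[OF d a] nc by blast
    qed
  qed
next
  assume sg: "set (gsuf p) \<subseteq> {..<k}"
  show "\<not> contains p (patt k)"
  proof
    assume "contains p (patt k)"
    then obtain t where t: "t < length p" "k \<le> ls p t" using contains_patt_ls by blast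
    have "gsuf p ! t \<in> set (gsuf p)" using t by simp
    then have "gsuf p ! t < k" using sg by auto
    then show False using C1[OF d s a t(1)] t by simp
  qed
qed

fun ip :: "nat list \<Rightarrow> nat \<Rightarrow> bool" where
  "ip [] b = False"
| "ip (y # s) b = ((b = y \<and> (\<exists>c\<in>set s. y < c)) \<or> ip s b)"

fun av :: "nat list \<Rightarrow> bool" where
  "av [] = True"
| "av (y # s) = (av s \<and> \<not> (\<exists>b. ip s b \<and> y < b))"

lemma ip_set: "ip s b \<Longrightarrow> b \<in> set s"
  by (induction s) auto

lemma ip_iff: "ip s b \<longleftrightarrow> (\<exists>j l. j < l \<and> l < length s \<and> s!j = b \<and> b < s!l)"
proof (induction s)
  case Nil then show ?case by simp
next
  case (Cons y s)
  show ?case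
  proof
    assume "ip (y # s) b"
    then consider "b = y" "\<exists>c\<in>set s. y < c" | "ip s b" by auto
    then show "\<exists>j l. j < l \<and> l < length (y # s) \<and> (y # s)!j = b \<and> b < (y # s)!l"
    proof cases
      case 1
      then obtain l where "l < length s" "y < s!l" by (auto simp: in_set_conv_nth)
      then show ?thesis using 1 by (intro exI[of _ 0] exI[of _ "Suc l"]) auto
    next
      case 2
      then obtain j l where "j < l \<and> l < length s \<and> s!j = b \<and> b < s!l" using Cons.IH by blast
      then show ?thesis by (intro exI[of _ "Suc j"] exI[of _ "Suc l"]) auto
    qed
  next
    assume "\<exists>j l. j < l \<and> l < length (y # s) \<and> (y # s)!j = b \<and> b < (y # s)!l"
    then obtain j l where h: "j < l" "l < length (y # s)" "(y # s)!j = b" "b < (y # s)!l" by blast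
    obtain l' where l': "l = Suc l'" using h(1) by (cases l) auto
    show "ip (y # s) b"
    proof (cases j)
      case 0
      then have "b = y" "s!l' \<in> set s" "y < s!l'" using h l' by auto
      then show ?thesis by auto
    next
      case (Suc j')
      then have "ip s b" using Cons.IH h l' by (intro iffD2[OF Cons.IH] exI[of _ j'] exI[of _ l']) auto
      then show ?thesis by simp
    qed
  qed
qed

lemma avoid123_Nil: "avoid123 []" unfolding avoid123_def by simp

lemma avoid123_Cons:
  "avoid123 (y # s) \<longleftrightarrow> avoid123 s \<and> (\<forall>j l. j < l \<longrightarrow> l < length s \<longrightarrow> \<not> (y < s!j \<and> s!j < s!l))"
proof
  assume a: "avoid123 (y # s)"
  have "avoid123 s" unfolding avoid123_def
  proof (intro allI impI)
    fix i j l assume "i < j" "j < l" "l < length s"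
    then show "\<not> (s!i < s!j \<and> s!j < s!l)"
      using a unfolding avoid123_def by (metis Suc_less_eq length_Cons nth_Cons_Suc)
  qed
  moreover have "\<forall>j l. j < l \<longrightarrow> l < length s \<longrightarrow> \<not> (y < s!j \<and> s!j < s!l)"
  proof (intro allI impI)
    fix j l assume "j < l" "l < length s"
    then show "\<not> (y < s!j \<and> s!j < s!l)"
      using a unfolding avoid123_def
      by (metis Suc_less_eq length_Cons nth_Cons_0 nth_Cons_Suc zero_less_Suc)
  qed
  ultimately show "avoid123 s \<and> (\<forall>j l. j < l \<longrightarrow> l < length s \<longrightarrow> \<not> (y < s!j \<and> s!j < s!l))" by blast
next
  assume h: "avoid123 s \<and> (\<forall>j l. j < l \<longrightarrow> l < length s \<longrightarrow> \<not> (y < s!j \<and> s!j < s!l))"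
  show "avoid123 (y # s)" unfolding avoid123_def
  proof (intro allI impI)
    fix i j l assume ij: "i < j" "j < l" "l < length (y # s)"
    obtain j' where j': "j = Suc j'" using ij by (cases j) auto
    obtain l' where l': "l = Suc l'" using ij by (cases l) auto
    show "\<not> ((y # s)!i < (y # s)!j \<and> (y # s)!j < (y # s)!l)"
    proof (cases i)
      case 0
      then show ?thesis using h ij j' l' by auto
    next
      case (Suc i')
      then show ?thesis using h ij j' l' unfolding avoid123_def by auto
    qed
  qed
qed

lemma av_iff: "av s \<longleftrightarrow> avoid123 s"
proof (induction s)
  case Nil then show ?case by (simp add: avoid123_Nil)
next
  case (Cons y s)
  have "(\<exists>b. ip s b \<and> y < b) \<longleftrightarrow> (\<exists>j l. j < l \<and> l < length s \<and> y < s!j \<and> s!j < s!l)"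
    unfolding ip_iff by blast
  then show ?case using Cons.IH avoid123_Cons[of y s] by auto
qed

fun recon :: "nat \<Rightarrow> nat list \<Rightarrow> nat list" where
  "recon n [] = []"
| "recon n (g # gs) = (let s = recon n gs; x = g + length gs + 1 in
      (if x \<in> set s then Min ({1..n} - set s) else x) # s)"

lemma length_recon [simp]: "length (recon n gs) = length gs"
  by (induction gs) (auto simp: Let_def)

lemma recon_gsuf:
  "distinct (pre @ s) \<Longrightarrow> set (pre @ s) = {1..n} \<Longrightarrow> avoid123 (pre @ s) \<Longrightarrow> recon n (gsuf s) = s"
proof (induction s arbitrary: pre)
  case Nil then show ?case by simp
next
  case (Cons y s')
  have IH: "recon n (gsuf s') = s'" using Cons.IH[of "pre @ [y]"] Cons.prems by simp
  define M where "M = Max (set (y # s'))"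
  have d: "distinct (y # s')" using Cons.prems by simp
  have sub: "set (y # s') \<subseteq> {1..n}" using Cons.prems by auto
  have z: "0 \<notin> set (y # s')" using sub by auto
  have "length (y # s') \<le> M"
    using card_le_Max[of "set (y # s')"] z distinct_card[OF d] unfolding M_def by simp
  then have x: "M - length (y # s') + length (gsuf s') + 1 = M" by simp
  have Mge: "\<forall>v\<in>set (y # s'). v \<le> M" unfolding M_def by simp
  have Min: "M \<in> set (y # s')" unfolding M_def by (rule Max_in) auto
  have eq: "recon n (gsuf (y # s')) = (if M \<in> set s' then Min ({1..n} - set s') else M) # s'"
    using x IH unfolding M_def by (simp add: Let_def)
  show ?case
  proof (cases "M \<in> set s'")
    case False
    then have "M = y" using Min by simp
    then show ?thesis using eq False by simp
  next
    case True
    have yM: "y < M" using d True Mge by (metis le_neq_implies_less distinct.simps(2) list.set_intros(1))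
    have R: "{1..n} - set s' = insert y (set pre)"
      using Cons.prems(1,2) by auto
    have "Min ({1..n} - set s') = y"
    proof (rule Min_eqI)
      show "finite ({1..n} - set s')" by simp
      show "y \<in> {1..n} - set s'" using R by simp
      fix v assume v: "v \<in> {1..n} - set s'"
      show "y \<le> v"
      proof (rule ccontr)
        assume "\<not> y \<le> v"
        then have vy: "v < y" by simp
        then have "v \<in> set pre" using R v by auto
        then obtain i where i: "i < length pre" "pre ! i = v" by (auto simp: in_set_conv_nth)
        obtain j where j: "j < length s'" "s' ! j = M" using True by (auto simp: in_set_conv_nth)
        let ?P = "pre @ y # s'"
        have "?P ! i = v" "?P ! length pre = y" "?P ! (length pre + Suc j) = M"
          using i j by (auto simp: nth_append)
        moreover have "i < length pre" "length pre < length pre + Suc j" "length pre + Suc j < length ?P"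
          using i j by auto
        ultimately show False using Cons.prems(3) vy yM unfolding avoid123_def by metis
      qed
    qed
    then show ?thesis using eq True by simp
  qed
qed

definition valid :: "nat \<Rightarrow> nat list \<Rightarrow> bool" where
  "valid n gs \<longleftrightarrow> steps gs \<and> (gs \<noteq> [] \<longrightarrow> hd gs + length gs \<le> n)"

lemma recon_inv:
  "valid n gs \<Longrightarrow> distinct (recon n gs) \<and> set (recon n gs) \<subseteq> {1..n}
     \<and> (gs \<noteq> [] \<longrightarrow> Max (set (recon n gs)) = hd gs + length gs) \<and> gsuf (recon n gs) = gs
     \<and> av (recon n gs) \<and> (\<forall>b. ip (recon n gs) b \<longrightarrow> (\<forall>v\<in>{1..n} - set (recon n gs). b < v))"
proof (induction gs)
  case Nil then show ?case by simp
next
  case (Cons g gs')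
  define s where "s = recon n gs'"
  define m where "m = length gs'"
  define x where "x = g + m + 1"
  have vs: "valid n gs'" using Cons.prems unfolding valid_def
    by (cases gs') (auto simp: steps_Cons)
  have xn: "x \<le> n" using Cons.prems unfolding valid_def x_def m_def by simp
  have IH: "distinct s" "set s \<subseteq> {1..n}" "gs' \<noteq> [] \<longrightarrow> Max (set s) = hd gs' + m"
    "gsuf s = gs'" "av s" "\<forall>b. ip s b \<longrightarrow> (\<forall>v\<in>{1..n} - set s. b < v)"
    using Cons.IH[OF vs] unfolding s_def m_def by auto
  have ls: "length s = m" unfolding s_def m_def by simp
  have le: "\<forall>v\<in>set s. v \<le> x"
  proof
    fix v assume v: "v \<in> set s"
    then have "gs' \<noteq> []" using ls unfolding m_def by auto
    then have "Max (set s) = hd gs' + m" "hd gs' \<le> g + 1"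
      using IH(3) Cons.prems unfolding valid_def by (auto simp: steps_Cons)
    moreover have "v \<le> Max (set s)" using v by simp
    ultimately show "v \<le> x" unfolding x_def by simp
  qed
  have rc: "recon n (g # gs') = (if x \<in> set s then Min ({1..n} - set s) else x) # s"
    unfolding s_def x_def m_def by (simp add: Let_def)
  show ?case
  proof (cases "x \<in> set s")
    case True
    define R where "R = {1..n} - set s"
    define y where "y = Min R"
    have cs: "card (set s) = m" using distinct_card[OF IH(1)] ls by simp
    have "\<not> {1..x} \<subseteq> set s"
    proof
      assume "{1..x} \<subseteq> set s"
      then have "card {1..x} \<le> card (set s)" by (rule card_mono[rotated]) simp
      then show False using cs unfolding x_def by simp
    qed
    then obtain v where v: "v \<in> {1..x}" "v \<notin> set s" by blast
    have vR: "v \<in> R" unfolding R_def using v xn by auto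
    have fR: "finite R" unfolding R_def by simp
    have yR: "y \<in> R" unfolding y_def using vR fR by (metis Min_in empty_iff)
    have yv: "y \<le> v" unfolding y_def using vR fR by simp
    have vx: "v < x" using v True by (metis atLeastAtMost_iff le_neq_implies_less)
    have yx: "y < x" using yv vx by simp
    have rc2: "recon n (g # gs') = y # s" using rc True unfolding y_def R_def by simp
    have Mx: "Max (set s) = x" using True le by (simp add: Max_eqI)
    have Max: "Max (set (y # s)) = x" using Mx yx True by (auto simp: Max_insert2 intro!: Max_eqI)
    have ip_lt: "\<forall>b. ip s b \<longrightarrow> b < y" using IH(6) yR unfolding R_def by blast
    show ?thesis unfolding rc2
    proof (intro conjI)
      show "distinct (y # s)" using yR IH(1) unfolding R_def by simp
      show "set (y # s) \<subseteq> {1..n}" using yR IH(2) unfolding R_def by auto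
      show "g # gs' \<noteq> [] \<longrightarrow> Max (set (y # s)) = hd (g # gs') + length (g # gs')"
        using Max unfolding x_def m_def by simp
      show "gsuf (y # s) = g # gs'" using Max IH(4) ls unfolding x_def m_def by simp
      show "av (y # s)" using IH(5) ip_lt by auto
      show "\<forall>b. ip (y # s) b \<longrightarrow> (\<forall>v\<in>{1..n} - set (y # s). b < v)"
      proof (intro allI impI ballI)
        fix b w assume b: "ip (y # s) b" and w: "w \<in> {1..n} - set (y # s)"
        then have wR: "w \<in> R" "w \<noteq> y" unfolding R_def by auto
        show "b < w"
        proof (cases "ip s b")
          case True then show ?thesis using IH(6) wR unfolding R_def by blast
        next
          case False
          then have "b = y" using b by simp
          moreover have "y \<le> w" unfolding y_def using wR fR by simp
          ultimately show ?thesis using wR by simp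
        qed
      qed
    qed
  next
    case False
    have rc2: "recon n (g # gs') = x # s" using rc False by simp
    have Max: "Max (set (x # s)) = x" using le by (auto intro!: Max_eqI)
    have x1: "1 \<le> x" unfolding x_def by simp
    show ?thesis unfolding rc2
    proof (intro conjI)
      show "distinct (x # s)" using False IH(1) by simp
      show "set (x # s) \<subseteq> {1..n}" using x1 xn IH(2) by auto
      show "g # gs' \<noteq> [] \<longrightarrow> Max (set (x # s)) = hd (g # gs') + length (g # gs')"
        using Max unfolding x_def m_def by simp
      show "gsuf (x # s) = g # gs'" using Max IH(4) ls unfolding x_def m_def by simp
      show "av (x # s)" using IH(5) le ip_set by fastforce
      show "\<forall>b. ip (x # s) b \<longrightarrow> (\<forall>v\<in>{1..n} - set (x # s). b < v)"
        using IH(6) le by fastforce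
    qed
  qed
qed

lemma Sav_eq: "Sav k n = {p. distinct p \<and> set p = {1..n} \<and> avoid123 p \<and> \<not> contains p (patt k)}"
  unfolding Sav_def perms_def avoids123_iff by (auto simp: avoids_def)

lemma Max_1n: "0 < n \<Longrightarrow> Max {1..n} = (n::nat)"
  by (rule Max_eqI) auto

lemma card_Sav: "card (Sav k n) = cntG k n"
proof -
  have "bij_betw gsuf (Sav k n) (G k n)"
  proof (rule bij_betw_byWitness[where f' = "recon n"])
    show "\<forall>p\<in>Sav k n. recon n (gsuf p) = p"
      unfolding Sav_eq using recon_gsuf[of "[]"] by auto
    have vG: "valid n g" if "g \<in> G k n" for g
      using that unfolding G_def valid_def by auto
    show "\<forall>g\<in>G k n. gsuf (recon n g) = g" using recon_inv vG by blast
    show "gsuf ` Sav k n \<subseteq> G k n"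
    proof
      fix g assume "g \<in> gsuf ` Sav k n"
      then obtain p where p: "p \<in> Sav k n" "g = gsuf p" by blast
      have d: "distinct p" and s: "set p = {1..n}" and a: "avoid123 p" and c: "\<not> contains p (patt k)"
        using p unfolding Sav_eq by auto
      have l: "length p = n" using len_perm[OF d s] .
      have "hd (gsuf p) = 0" if ne: "gsuf p \<noteq> []"
      proof -
        obtain x xs where "p = x # xs" using ne by (cases p) auto
        moreover have "0 < n" using l ne by (cases p) auto
        ultimately show ?thesis using s l Max_1n[of n] by simp
      qed
      then show "g \<in> G k n" unfolding G_def p(2)
        using l avoid_patt_iff[OF d s a] c steps_gsuf by auto
    qed
    show "recon n ` G k n \<subseteq> Sav k n"
    proof
      fix p assume "p \<in> recon n ` G k n"
      then obtain g where g: "g \<in> G k n" "p = recon n g" by blast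
      have I: "distinct p" "set p \<subseteq> {1..n}" "gsuf p = g" "av p"
        using recon_inv[OF vG[OF g(1)]] g(2) by auto
      have l: "length p = n" using g unfolding G_def by simp
      have s: "set p = {1..n}"
        using card_subset_eq[OF _ I(2)] distinct_card[OF I(1)] l by simp
      have a: "avoid123 p" using I(4) av_iff by simp
      have "set (gsuf p) \<subseteq> {..<k}" using I(3) g(1) unfolding G_def by simp
      then have "\<not> contains p (patt k)" using avoid_patt_iff[OF I(1) s a] by simp
      then show "p \<in> Sav k n" unfolding Sav_eq using I(1) s a by simp
    qed
  qed
  then show ?thesis unfolding cntG_def by (rule bij_betw_same_card)
qed

lemma genf_eq: "genf k = gfG k"
  unfolding genf_def gfG_def card_Sav ..

lemma inv1: "inverse (1 - fps_X) * (1 - fps_X :: rat fps) = 1"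
  by (rule inverse_mult_eq_1) simp

lemma inv2: "(1 - 2 * fps_X :: rat fps) * inverse (1 - 2 * fps_X) = 1"
  by (rule inverse_mult_eq_1') (simp add: fps_numeral_fps_const)

lemma inv3: "(1 - 3 * fps_X + fps_X ^ 2 :: rat fps) * inverse (1 - 3 * fps_X + fps_X ^ 2) = 1"
  by (rule inverse_mult_eq_1') (simp add: fps_numeral_fps_const)

lemma gf1: "gfG 1 = inverse (1 - fps_X)"
  using A_inv[of 0] A_0 by simp

lemma gf2: "gfG 2 = (1 - fps_X) * inverse (1 - 2 * fps_X)"
proof -
  let ?I1 = "inverse (1 - fps_X) :: rat fps"
  let ?I2 = "inverse (1 - 2 * fps_X) :: rat fps"
  have "(1 - fps_X * gfG 1) * ((1 - fps_X) * ?I2) = (1 - fps_X) * ?I2 - fps_X * (?I1 * (1 - fps_X)) * ?I2"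
    unfolding gf1 by (simp add: algebra_simps)
  also have "\<dots> = (1 - 2 * fps_X) * ?I2" unfolding inv1 by (simp add: algebra_simps)
  also have "\<dots> = 1" by (rule inv2)
  finally have "(1 - fps_X * gfG 1) * ((1 - fps_X) * ?I2) = 1" .
  then have "inverse (1 - fps_X * gfG 1) = (1 - fps_X) * ?I2" by (rule fps_inverse_unique)
  then show ?thesis using A_inv[of 1] by (simp add: numeral_2_eq_2)
qed

lemma gf3: "gfG 3 = (1 - 2 * fps_X) * inverse (1 - 3 * fps_X + fps_X ^ 2)"
proof -
  let ?I2 = "inverse (1 - 2 * fps_X) :: rat fps"
  let ?IQ = "inverse (1 - 3 * fps_X + fps_X ^ 2) :: rat fps"
  have "(1 - fps_X * gfG 2) * ((1 - 2 * fps_X) * ?IQ)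
      = (1 - 2 * fps_X) * ?IQ - fps_X * (1 - fps_X) * ((1 - 2 * fps_X) * ?I2) * ?IQ"
    unfolding gf2 by (simp add: algebra_simps)
  also have "\<dots> = (1 - 3 * fps_X + fps_X ^ 2) * ?IQ" unfolding inv2 by (simp add: algebra_simps power2_eq_square)
  also have "\<dots> = 1" by (rule inv3)
  finally have "(1 - fps_X * gfG 2) * ((1 - 2 * fps_X) * ?IQ) = 1" .
  then have "inverse (1 - fps_X * gfG 2) = (1 - 2 * fps_X) * ?IQ" by (rule fps_inverse_unique)
  then show ?thesis using A_inv[of 2] by (simp add: numeral_3_eq_3 numeral_2_eq_2)
qed

lemma c3_rec: "cntG 3 (n + 2) + cntG 3 n = 3 * cntG 3 (n + 1)"
proof -
  let ?Q = "1 - 3 * fps_X + fps_X ^ 2 :: rat fps"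
  let ?IQ = "inverse ?Q"
  have "gfG 3 * ?Q = (1 - 2 * fps_X) * (?Q * ?IQ)" unfolding gf3 by (simp add: algebra_simps)
  then have E: "gfG 3 * ?Q = 1 - 2 * fps_X" using inv3 by simp
  have E2: "gfG 3 * ?Q = gfG 3 - fps_const 3 * (fps_X * gfG 3) + fps_X ^ 2 * gfG 3"
    by (simp add: algebra_simps fps_numeral_fps_const)
  have "fps_nth (gfG 3 * ?Q) (n + 2) = of_nat (cntG 3 (n + 2)) - 3 * of_nat (cntG 3 (n + 1)) + of_nat (cntG 3 n)"
    unfolding E2 by (simp add: fps_X_power_mult_nth gfG_def)
  moreover have "fps_nth (gfG 3 * ?Q) (n + 2) = 0" unfolding E by (simp add: fps_numeral_fps_const)
  ultimately have "(of_nat (cntG 3 (n + 2) + cntG 3 n) :: rat) = of_nat (3 * cntG 3 (n + 1))" by simp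
  then show ?thesis by (simp only: of_nat_eq_iff)
qed

lemma c3_Fbar: "cntG 3 n = Fbar n"
proof (induction n rule: Fbar.induct)
  case 1 then show ?case by (simp add: a_0)
next
  case 2
  have "cntG (Suc 2) (Suc 0) = 1" using a_rec[of 2 0] by (simp add: a_0)
  then show ?case by (simp add: numeral_3_eq_3)
next
  case 3
  have "cntG (Suc 2) (Suc 0) = 1" using a_rec[of 2 0] by (simp add: a_0)
  then have "cntG 3 1 = 1" by (simp add: numeral_3_eq_3)
  then show ?case using c3_rec[of 0] by (simp add: a_0)
next
  case (4 n)
  have "cntG 3 (Suc (Suc (Suc n))) + cntG 3 (Suc n) = 3 * cntG 3 (Suc (Suc n))"
    using c3_rec[of "Suc n"] by simp
  then show ?case using 4 by simp
qed

theorem mainTheorem3: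
  shows "genf 2 = (1 - fps_X) * inverse (1 - 2 * fps_X)
    \<and> (\<forall>k\<ge>3. genf k = inverse (1 - fps_X * genf (k - 1)))
    \<and> genf 3 = (1 - 2 * fps_X) * inverse (1 - 3 * fps_X + fps_X ^ 2)
    \<and> (\<forall>n. card (Sav 3 n) = Fbar n)"
proof (intro conjI allI impI)
  show "genf 2 = (1 - fps_X) * inverse (1 - 2 * fps_X)" unfolding genf_eq by (rule gf2)
  show "genf 3 = (1 - 2 * fps_X) * inverse (1 - 3 * fps_X + fps_X ^ 2)" unfolding genf_eq by (rule gf3)
  fix k :: nat assume "3 \<le> k"
  then obtain k' where "k = Suc k'" by (cases k) auto
  then show "genf k = inverse (1 - fps_X * genf (k - 1))" unfolding genf_eq using A_inv by simp
next
  fix n show "card (Sav 3 n) = Fbar n" using card_Sav c3_Fbar by simp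
qed

end
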